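(* Assume $\hat\omega\in\mathbb{P}_\Omega$ and that $\hat\omega$ and $\mathbf K$ are such that, for every $\omega^{(n)}\in\mathbb{P}_\Omega$ (with $\Delta_n\ne0$), the step $\hat\alpha_n$ defined in the context satisfies $\hat\alpha_n\le\omega^{(n)}_{i_n^-}$. Then the vertex-exchange iteration $\omega^{(n+1)}=\omega^{(n)}+\hat\alpha_n\Delta_n$, initialized at any $\omega^{(1)}\in\mathbb{P}_\Omega$, satisfies $$\|\omega^{(n)}-\hat\omega\|_{\mathbf K}^2\le\frac{8\lambda_{\max}(\mathbf K)}{n+3},\qquad n\ge1.$$
   Context: $\mathbf K$ is a real symmetric positive definite $\Omega\times\Omega$ matrix with largest eigenvalue $\lambda_{\max}(\mathbf K)$; $\|u\|_{\mathbf K}^2=u^T\mathbf K u$. $e_i$ is the $i$-th canonical basis vector of $\mathbb{R}^\Omega$ and $\mathbb{P}_\Omega=\{\omega\in\mathbb{R}^\Omega:\omega_i\ge0,\sum_i\omega_i=1\}$. Vertex-exchange step: $i_n^+\in\arg\min_{i=1,\dots,\Omega}e_i^T\mathbf K(\omega^{(n)}-\hat\omega)$, $i_n^-\in\arg\max_{i:\,\omega^{(n)}_i>0}e_i^T\mathbf K(\omega^{(n)}-\hat\omega)$, $\Delta_n=e_{i_n^+}-e_{i_n^-}$, and $\hat\alpha_n=\Delta_n^T\mathbf K(\hat\omega-\omega^{(n)})/\|\Delta_n\|_{\mathbf K}^2$ (if $\Delta_n=0$ the iterate is left unchanged). *)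

theory Defs
  imports "HOL-Analysis.Analysis"
begin

text \<open>Index set {1..Omega} is rendered as a finite type 'n; vectors are real^'n,
 the matrix K is real^'n^'n.\<close>

definition Knorm2 :: "real^'n^'n \<Rightarrow> real^'n \<Rightarrow> real" where
  "Knorm2 K u = u \<bullet> (K *v u)"

definition sym_pos_def_mat :: "real^'n^'n \<Rightarrow> bool" where
  "sym_pos_def_mat K \<longleftrightarrow> transpose K = K \<and> (\<forall>u. u \<noteq> 0 \<longrightarrow> u \<bullet> (K *v u) > 0)"

definition eigenvalues_mat :: "real^'n^'n \<Rightarrow> real set" where
  "eigenvalues_mat K = {l. \<exists>v. v \<noteq> 0 \<and> K *v v = l *\<^sub>R v}"

definition lambda_max :: "real^'n^'n \<Rightarrow> real" where
  "lambda_max K = Max (eigenvalues_mat K)"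

definition ecanon :: "'n::finite \<Rightarrow> real^'n" where
  "ecanon i = axis i 1"

definition prob_simplex :: "(real^'n::finite) set" where
  "prob_simplex = {w. (\<forall>i. 0 \<le> w $ i) \<and> (\<Sum>i\<in>UNIV. w $ i) = 1}"

definition vx_choice :: "real^'n^'n \<Rightarrow> real^'n \<Rightarrow> real^'n \<Rightarrow> 'n::finite \<Rightarrow> 'n \<Rightarrow> bool" where
  "vx_choice K wh w ip im \<longleftrightarrow>
     (\<forall>i. ecanon ip \<bullet> (K *v (w - wh)) \<le> ecanon i \<bullet> (K *v (w - wh))) \<and>
     0 < w $ im \<and>
     (\<forall>i. 0 < w $ i \<longrightarrow> ecanon i \<bullet> (K *v (w - wh)) \<le> ecanon im \<bullet> (K *v (w - wh)))"

definition vx_Delta :: "'n::finite \<Rightarrow> 'n \<Rightarrow> real^'n" where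
  "vx_Delta ip im = ecanon ip - ecanon im"

definition vx_alpha :: "real^'n^'n \<Rightarrow> real^'n \<Rightarrow> real^'n \<Rightarrow> 'n::finite \<Rightarrow> 'n \<Rightarrow> real" where
  "vx_alpha K wh w ip im =
     (vx_Delta ip im \<bullet> (K *v (wh - w))) / Knorm2 K (vx_Delta ip im)"

definition vx_step :: "real^'n^'n \<Rightarrow> real^'n \<Rightarrow> real^'n \<Rightarrow> real^'n::finite \<Rightarrow> bool" where
  "vx_step K wh w w' \<longleftrightarrow> (\<exists>ip im. vx_choice K wh w ip im \<and>
     w' = (if vx_Delta ip im = 0 then w
           else w + vx_alpha K wh w ip im *\<^sub>R vx_Delta ip im))"

end

theory Submission
  imports Defs
begin


lemma sym_inner:
  fixes K :: "real^'n::finite^'n"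
  assumes "transpose K = K"
  shows "x \<bullet> (K *v y) = y \<bullet> (K *v x)"
proof -
  have "x \<bullet> (K *v y) = (x v* K) \<bullet> y" by (simp add: dot_lmul_matrix)
  also have "x v* K = K *v x" using vector_transpose_matrix[of x K] assms by simp
  finally show ?thesis by (simp add: inner_commute)
qed

lemma quad_expand:
  fixes K :: "real^'n::finite^'n"
  assumes "transpose K = K"
  shows "(x + t *\<^sub>R y) \<bullet> (K *v (x + t *\<^sub>R y)) = x \<bullet> (K *v x) + 2 * t * (y \<bullet> (K *v x)) + t^2 * (y \<bullet> (K *v y))"
proof -
  have "(x + t *\<^sub>R y) \<bullet> (K *v (x + t *\<^sub>R y)) = x \<bullet> (K *v x) + t * (x \<bullet> (K *v y)) + t * (y \<bullet> (K *v x)) + t*t * (y \<bullet> (K *v y))"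
    by (simp add: matrix_vector_right_distrib matrix_vector_mult_scaleR inner_add_left inner_add_right algebra_simps)
  then show ?thesis using sym_inner[OF assms, of x y] by (simp add: power2_eq_square)
qed

lemma quad_nonpos:
  fixes b c :: real
  assumes "\<And>t. 2 * t * b + t^2 * c \<le> 0"
  shows "b = 0"
proof (rule ccontr)
  assume b: "b \<noteq> 0"
  define a where "a = \<bar>c\<bar> + 1"
  have p: "a > 0" "- a \<le> c" unfolding a_def by auto
  define t where "t = b / a"
  have "t^2 * (- a) \<le> t^2 * c" using p by (intro mult_left_mono) auto
  moreover have "2*t*b - t^2*a = b^2 / a"
    unfolding t_def using p by (simp add: field_simps power2_eq_square)
  moreover have "b^2 / a > 0" using b p by simp
  ultimately show False using assms[of t] by linarith
qed

lemma rayleigh_max: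
  fixes K :: "real^'n::finite^'n"
  assumes "transpose K = K"
  shows "\<exists>M\<in>eigenvalues_mat K. \<forall>u. u \<bullet> (K *v u) \<le> M * (u \<bullet> u)"
proof -
  let ?q = "\<lambda>u::real^'n. u \<bullet> (K *v u)"
  have cont: "continuous_on (sphere 0 1) ?q"
    by (intro continuous_intros linear_continuous_on) (auto intro: linear_linear)
  have ne: "sphere (0::real^'n) 1 \<noteq> {}"
    by (metis norm_axis_1 mem_sphere_0 empty_iff)
  obtain v where v: "v \<in> sphere 0 1" and vmax: "\<And>u. u \<in> sphere 0 1 \<Longrightarrow> ?q u \<le> ?q v"
    using continuous_attains_sup[OF compact_sphere ne cont] by blast
  define M where "M = ?q v"
  have vv: "v \<bullet> v = 1" using v by (simp add: dot_square_norm)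
  have bound: "?q u \<le> M * (u \<bullet> u)" for u
  proof (cases "u = 0")
    case True then show ?thesis by simp
  next
    case False
    define u' where "u' = (1 / norm u) *\<^sub>R u"
    have "u' \<in> sphere 0 1" using False by (simp add: u'_def)
    then have "?q u' \<le> M" using vmax M_def by simp
    moreover have "?q u' = ?q u / (norm u)^2"
      by (simp add: u'_def matrix_vector_mult_scaleR power2_eq_square)
    moreover have "u \<bullet> u = (norm u)^2" by (simp add: dot_square_norm)
    moreover have "norm u > 0" using False by simp
    ultimately show ?thesis by (simp add: divide_le_eq mult.commute)
  qed
  have orth: "w \<bullet> (K *v v - M *\<^sub>R v) = 0" for w
  proof -
    have "2 * t * (w \<bullet> (K *v v - M *\<^sub>R v)) + t^2 * (?q w - M * (w \<bullet> w)) \<le> 0" for t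
    proof -
      have "?q (v + t *\<^sub>R w) \<le> M * ((v + t *\<^sub>R w) \<bullet> (v + t *\<^sub>R w))" by (rule bound)
      moreover have "?q (v + t *\<^sub>R w) = M + 2*t*(w \<bullet> (K *v v)) + t^2 * ?q w"
        using quad_expand[OF assms] M_def by simp
      moreover have "(v + t *\<^sub>R w) \<bullet> (v + t *\<^sub>R w) = 1 + 2*t*(w \<bullet> v) + t^2 * (w \<bullet> w)"
        using vv by (simp add: inner_add_left inner_add_right inner_commute power2_eq_square algebra_simps)
      ultimately have "M + 2*t*(w \<bullet> (K *v v)) + t^2 * ?q w \<le> M * (1 + 2*t*(w \<bullet> v) + t^2 * (w \<bullet> w))"
        by metis
      then show ?thesis by (simp add: inner_diff_right algebra_simps)
    qed
    then show ?thesis by (rule quad_nonpos)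
  qed
  have "K *v v - M *\<^sub>R v = 0"
    using orth[of "K *v v - M *\<^sub>R v"] by simp
  then have "K *v v = M *\<^sub>R v" by simp
  moreover have "v \<noteq> 0" using v by auto
  ultimately have "M \<in> eigenvalues_mat K" unfolding eigenvalues_mat_def by blast
  then show ?thesis using bound by blast
qed

lemma eig_finite:
  fixes K :: "real^'n::finite^'n"
  assumes "transpose K = K"
  shows "finite (eigenvalues_mat K)"
proof -
  define E where "E = eigenvalues_mat K"
  define f where "f l = (SOME v. v \<noteq> 0 \<and> K *v v = l *\<^sub>R v)" for l
  have f: "f l \<noteq> 0 \<and> K *v f l = l *\<^sub>R f l" if "l \<in> E" for l
  proof -
    have "\<exists>v. v \<noteq> 0 \<and> K *v v = l *\<^sub>R v" using that by (simp add: E_def eigenvalues_mat_def)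
    then show ?thesis unfolding f_def by (rule someI_ex)
  qed
  have inj: "inj_on f E"
  proof (rule inj_onI)
    fix a b assume a: "a \<in> E" and b: "b \<in> E" and e: "f a = f b"
    have "a *\<^sub>R f a = K *v f a" using f[OF a] by simp
    also have "\<dots> = K *v f b" using e by simp
    also have "\<dots> = b *\<^sub>R f b" using f[OF b] by simp
    also have "\<dots> = b *\<^sub>R f a" using e by simp
    finally have "a *\<^sub>R f a = b *\<^sub>R f a" .
    then have "(a - b) *\<^sub>R f a = 0" by (simp add: scaleR_diff_left)
    then show "a = b" using f[OF a] by simp
  qed
  have po: "pairwise orthogonal (f ` E)"
    unfolding pairwise_def orthogonal_def
  proof (intro ballI impI)
    fix x y assume x: "x \<in> f ` E" and y: "y \<in> f ` E" and ne: "x \<noteq> y"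
    obtain a where a: "a \<in> E" "x = f a" using x by blast
    obtain b where b: "b \<in> E" "y = f b" using y by blast
    have ab: "a \<noteq> b" using ne a b by blast
    have "x \<bullet> (K *v y) = y \<bullet> (K *v x)" by (rule sym_inner[OF assms])
    moreover have "x \<bullet> (K *v y) = b * (x \<bullet> y)" using f[OF b(1)] b(2) by simp
    moreover have "y \<bullet> (K *v x) = a * (x \<bullet> y)" using f[OF a(1)] a(2) by (simp add: inner_commute)
    ultimately have "(a - b) * (x \<bullet> y) = 0" by (simp add: algebra_simps) (metis)
    then show "x \<bullet> y = 0" using ab by simp
  qed
  have "0 \<notin> f ` E" using f by auto
  with po have "independent (f ` E)" by (rule pairwise_orthogonal_independent)
  then have "finite (f ` E)" by (rule independent_imp_finite)
  then show ?thesis using inj finite_imageD unfolding E_def by blast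
qed

lemma knorm_le_lmax:
  fixes K :: "real^'n::finite^'n"
  assumes "transpose K = K"
  shows "Knorm2 K u \<le> lambda_max K * (u \<bullet> u)"
proof -
  obtain M where M: "M \<in> eigenvalues_mat K" "\<And>u. u \<bullet> (K *v u) \<le> M * (u \<bullet> u)"
    using rayleigh_max[OF assms] by blast
  have "M \<le> lambda_max K" unfolding lambda_max_def using eig_finite[OF assms] M(1) by simp
  then have "M * (u \<bullet> u) \<le> lambda_max K * (u \<bullet> u)" by (simp add: mult_right_mono)
  then show ?thesis using M(2)[of u] unfolding Knorm2_def by linarith
qed



lemma arith_step:
  fixes L x m :: real
  assumes L: "L > 0" and m: "m \<ge> 1" and x0: "0 \<le> x" and xa: "x \<le> 8*L/(m+3)"
  shows "x - x^2/(2*L) \<le> 8*L/(m+4)"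
proof -
  define y where "y = x / L"
  have xy: "x = L * y" using L unfolding y_def by simp
  have y0: "0 \<le> y" using x0 L unfolding y_def by simp
  have ya: "y \<le> 8/(m+3)" using xa L m unfolding y_def by (simp add: divide_le_eq field_simps)
  have e1: "x - x^2/(2*L) = L * (y - y^2/2)" using L xy by (simp add: field_simps power2_eq_square)
  have e2: "8*L/(m+4) = L * (8/(m+4))" by simp
  have "y - y^2/2 \<le> 8/(m+4)"
  proof (cases "m \<le> 12")
    case True
    have "0 \<le> (y-1)^2" by simp
    moreover have "(y-1)^2 = y^2 - 2*y + 1" by (simp add: power2_diff)
    ultimately have "y - y^2/2 \<le> 1/2" by linarith
    moreover have "1/2 \<le> 8/(m+4)" using True m by (simp add: field_simps)
    ultimately show ?thesis by linarith
  next
    case False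
    define a where "a = 8/(m+3)"
    have a1: "a \<le> 1" using False unfolding a_def by (simp add: field_simps)
    have ya': "y \<le> a" using ya a_def by simp
    have "(a - y) * (1 - (a+y)/2) \<ge> 0" using ya' a1 y0 by (intro mult_nonneg_nonneg) auto
    moreover have "(a - y) * (1 - (a+y)/2) = (a - a^2/2) - (y - y^2/2)" by (simp add: power2_eq_square field_simps)
    ultimately have "y - y^2/2 \<le> a - a^2/2" by linarith
    also have "a - a^2/2 = 8*(m-1)/(m+3)^2"
    proof -
      define c where "c = m + 3"
      have c: "c \<noteq> 0" using m unfolding c_def by simp
      have "8/c - (8/c)^2/2 = 8*(c-4)/c^2" using c by (simp add: field_simps power2_eq_square)
      then show ?thesis unfolding a_def c_def by simp
    qed
    also have "\<dots> \<le> 8/(m+4)"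
    proof -
      have "(m-1)*(m+4) \<le> (m+3)^2" using m by (simp add: power2_eq_square algebra_simps)
      then show ?thesis using m by (simp add: field_simps)
    qed
    finally show ?thesis .
  qed
  then have "L * (y - y^2/2) \<le> L * (8/(m+4))" using L by (intro mult_left_mono) auto
  then show ?thesis using e1 e2 by (simp add: mult.commute)
qed

lemma ecanon_inner: "ecanon i \<bullet> x = x $ i"
  by (simp add: ecanon_def inner_axis')

lemma ecanon_nth: "ecanon i $ j = (if j = i then 1 else 0)"
  by (simp add: ecanon_def axis_def)

lemma inner_vec_sum: "(x::real^'n::finite) \<bullet> y = (\<Sum>i\<in>UNIV. x $ i * y $ i)"
  by (simp add: inner_vec_def)

lemma simplex_dist:
  assumes "a \<in> prob_simplex" "b \<in> prob_simplex"
  shows "(a - b) \<bullet> (a - b) \<le> 2"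
proof -
  have sq: "x \<bullet> x \<le> 1" if "x \<in> prob_simplex" for x :: "real^'a::finite"
  proof -
    have nn: "\<And>i. 0 \<le> x $ i" and s: "(\<Sum>i\<in>UNIV. x $ i) = 1" using that by (auto simp: prob_simplex_def)
    have le1: "x $ i \<le> 1" for i using member_le_sum[of i UNIV "\<lambda>i. x $ i"] nn s by simp
    have "x \<bullet> x = (\<Sum>i\<in>UNIV. x $ i * x $ i)" by (rule inner_vec_sum)
    also have "\<dots> \<le> (\<Sum>i\<in>UNIV. x $ i)"
      by (intro sum_mono) (metis le1 nn mult_left_le mult.commute)
    finally show ?thesis using s by simp
  qed
  have "a \<bullet> b \<ge> 0" unfolding inner_vec_sum using assms
    by (intro sum_nonneg) (auto simp: prob_simplex_def)
  moreover have "(a - b) \<bullet> (a - b) = a \<bullet> a + b \<bullet> b - 2 * (a \<bullet> b)"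
    by (simp add: inner_diff_left inner_diff_right inner_commute)
  ultimately show ?thesis using sq[OF assms(1)] sq[OF assms(2)] by linarith
qed



lemma knorm_nonneg:
  assumes "\<forall>u. u \<noteq> 0 \<longrightarrow> u \<bullet> (K *v u) > 0"
  shows "Knorm2 K u \<ge> 0"
  using assms unfolding Knorm2_def by (cases "u = 0") (auto intro: less_imp_le)

lemma step_lemma:
  fixes K :: "real^'n::finite^'n"
  assumes symK: "transpose K = K" and posK: "\<forall>u. u \<noteq> 0 \<longrightarrow> u \<bullet> (K *v u) > 0"
    and L: "lambda_max K > 0"
    and wh: "wh \<in> prob_simplex" and v: "v \<in> prob_simplex"
    and ch: "vx_choice K wh v ip im"
    and sc: "vx_Delta ip im \<noteq> 0 \<Longrightarrow> vx_alpha K wh v ip im \<le> v $ im"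
    and v': "v' = (if vx_Delta ip im = 0 then v else v + vx_alpha K wh v ip im *\<^sub>R vx_Delta ip im)"
  shows "v' \<in> prob_simplex \<and> Knorm2 K (v' - wh) \<le> Knorm2 K (v - wh) - (Knorm2 K (v - wh))^2 / (2 * lambda_max K)"
proof -
  define g where "g = K *v (v - wh)"
  define F where "F = Knorm2 K (v - wh)"
  define D where "D = vx_Delta ip im"
  define b where "b = D \<bullet> g"
  define Lm where "Lm = lambda_max K"
  have F0: "F \<ge> 0" unfolding F_def by (rule knorm_nonneg[OF posK])
  have vnn: "\<And>i. 0 \<le> v $ i" and vs: "(\<Sum>i\<in>UNIV. v $ i) = 1" using v by (auto simp: prob_simplex_def)
  have whnn: "\<And>i. 0 \<le> wh $ i" and whs: "(\<Sum>i\<in>UNIV. wh $ i) = 1" using wh by (auto simp: prob_simplex_def)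
  have chip: "\<And>i. g $ ip \<le> g $ i" and chim0: "0 < v $ im"
    and chim: "\<And>i. 0 < v $ i \<Longrightarrow> g $ i \<le> g $ im"
    using ch unfolding vx_choice_def g_def ecanon_inner by auto
  have "F = (v - wh) \<bullet> g" unfolding F_def Knorm2_def g_def ..
  also have "\<dots> = (\<Sum>i\<in>UNIV. v $ i * g $ i) - (\<Sum>i\<in>UNIV. wh $ i * g $ i)"
    unfolding inner_vec_sum by (simp add: left_diff_distrib sum_subtractf)
  finally have Fsum: "F = (\<Sum>i\<in>UNIV. v $ i * g $ i) - (\<Sum>i\<in>UNIV. wh $ i * g $ i)" .
  have s1: "(\<Sum>i\<in>UNIV. v $ i * g $ i) \<le> g $ im"
  proof -
    have "(\<Sum>i\<in>UNIV. v $ i * g $ i) \<le> (\<Sum>i\<in>UNIV. v $ i * g $ im)"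
    proof (rule sum_mono)
      fix i :: 'n
      show "v $ i * g $ i \<le> v $ i * g $ im"
      proof (cases "v $ i > 0")
        case True then show ?thesis using chim[OF True] by (simp add: mult_left_mono)
      next
        case False then have "v $ i = 0" using vnn[of i] by simp
        then show ?thesis by simp
      qed
    qed
    also have "\<dots> = g $ im" using vs by (simp add: sum_distrib_right[symmetric])
    finally show ?thesis .
  qed
  have s2: "(\<Sum>i\<in>UNIV. wh $ i * g $ i) \<ge> g $ ip"
  proof -
    have "(\<Sum>i\<in>UNIV. wh $ i * g $ i) \<ge> (\<Sum>i\<in>UNIV. wh $ i * g $ ip)"
      by (rule sum_mono) (simp add: chip whnn mult_left_mono)
    moreover have "(\<Sum>i\<in>UNIV. wh $ i * g $ ip) = g $ ip" using whs by (simp add: sum_distrib_right[symmetric])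
    ultimately show ?thesis by simp
  qed
  have bdef: "b = g $ ip - g $ im" unfolding b_def D_def vx_Delta_def by (simp add: inner_diff_left ecanon_inner)
  have Fb: "F \<le> - b" using Fsum s1 s2 bdef by linarith
  show ?thesis
  proof (cases "D = 0")
    case True
    then have "b = 0" unfolding b_def by simp
    then have "F = 0" using F0 Fb by simp
    moreover have "v' = v" using v' True D_def by simp
    ultimately show ?thesis using v F_def by simp
  next
    case False
    define Q where "Q = Knorm2 K D"
    have Q0: "Q > 0" using posK False unfolding Q_def Knorm2_def by simp
    have DD: "D \<bullet> D \<le> 2"
    proof -
      have "D \<bullet> D = D $ ip - D $ im" unfolding D_def vx_Delta_def
        by (simp add: inner_diff_left ecanon_inner)
      also have "\<dots> \<le> 2" unfolding D_def vx_Delta_def by (simp add: ecanon_nth)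
      finally show ?thesis .
    qed
    have Q2: "Q \<le> 2 * Lm"
    proof -
      have "Q \<le> Lm * (D \<bullet> D)" unfolding Q_def Lm_def by (rule knorm_le_lmax[OF symK])
      also have "\<dots> \<le> Lm * 2" using DD L Lm_def by (intro mult_left_mono) auto
      finally show ?thesis by simp
    qed
    define \<alpha> where "\<alpha> = vx_alpha K wh v ip im"
    have Kneg: "K *v (wh - v) = - g" unfolding g_def by (simp add: matrix_vector_mult_diff_distrib)
    have adef: "\<alpha> = - b / Q" unfolding \<alpha>_def vx_alpha_def Q_def b_def D_def Kneg by simp
    have a0: "\<alpha> \<ge> 0"
    proof -
      have "b \<le> 0" using Fb F0 by simp
      then show ?thesis using adef Q0 by (simp add: divide_nonpos_pos)
    qed
    have aim: "\<alpha> \<le> v $ im" using sc False D_def \<alpha>_def by simp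
    have v'eq: "v' = v + \<alpha> *\<^sub>R D" using v' False D_def \<alpha>_def by simp
    have "Knorm2 K (v' - wh) = Knorm2 K ((v - wh) + \<alpha> *\<^sub>R D)" using v'eq by (simp add: algebra_simps)
    also have "\<dots> = F + 2 * \<alpha> * b + \<alpha>^2 * Q"
      unfolding Knorm2_def F_def Q_def b_def g_def by (rule quad_expand[OF symK])
    also have "\<dots> = F - b^2 / Q"
    proof -
      have hb: "b = - (Q * \<alpha>)" using adef Q0 by simp
      show ?thesis unfolding hb using Q0 by (simp add: field_simps power2_eq_square)
    qed
    finally have Kv': "Knorm2 K (v' - wh) = F - b^2 / Q" .
    have "F^2 \<le> b^2"
    proof -
      have "F^2 \<le> (-b)^2" using Fb F0 by (rule power_mono)
      then show ?thesis by simp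
    qed
    have "F^2 / (2 * Lm) \<le> F^2 / Q"
      using Q0 Q2 by (intro divide_left_mono) auto
    also have "\<dots> \<le> b^2 / Q" using \<open>F^2 \<le> b^2\<close> Q0 by (intro divide_right_mono) auto
    finally have ineq: "F^2 / (2 * Lm) \<le> b^2 / Q" .
    have simp': "v' \<in> prob_simplex"
    proof -
      have comp: "v' $ i = v $ i + \<alpha> * ((if i = ip then 1 else 0) - (if i = im then 1 else 0))" for i
        unfolding v'eq D_def vx_Delta_def by (simp add: ecanon_nth)
      have nn: "0 \<le> v' $ i" for i
      proof (cases "i = im")
        case True
        then show ?thesis unfolding comp using aim a0 by auto
      next
        case False
        then show ?thesis unfolding comp using a0 vnn[of i] by auto
      qed
      have dsum: "(\<Sum>i\<in>UNIV. \<alpha> * (if i = j then 1 else (0::real))) = \<alpha>" for j :: 'n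
        by (subst sum_distrib_left[symmetric]) simp
      have "(\<Sum>i\<in>UNIV. v' $ i) = (\<Sum>i\<in>UNIV. v $ i) + ((\<Sum>i\<in>UNIV. \<alpha> * (if i = ip then 1 else 0)) - (\<Sum>i\<in>UNIV. \<alpha> * (if i = im then 1 else (0::real))))"
        unfolding comp by (simp add: sum.distrib right_diff_distrib sum_subtractf)
      also have "\<dots> = 1" using vs dsum by simp
      finally show ?thesis using nn unfolding prob_simplex_def by simp
    qed
    show ?thesis using simp' Kv' ineq F_def Lm_def by simp
  qed
qed



theorem lemmaA7:
  fixes K :: "real^'n::finite^'n" and wh :: "real^'n" and w :: "nat \<Rightarrow> real^'n"
  assumes K: "sym_pos_def_mat K"
    and wh: "wh \<in> prob_simplex"
    and step_cond: "\<And>v ip im. v \<in> prob_simplex \<Longrightarrow> vx_choice K wh v ip im \<Longrightarrow>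
                      vx_Delta ip im \<noteq> 0 \<Longrightarrow> vx_alpha K wh v ip im \<le> v $ im"
    and init: "w 1 \<in> prob_simplex"
    and iter: "\<And>n. n \<ge> 1 \<Longrightarrow> vx_step K wh (w n) (w (Suc n))"
  shows "\<forall>n\<ge>1. Knorm2 K (w n - wh) \<le> 8 * lambda_max K / (real n + 3)"
proof -
  have symK: "transpose K = K" and posK: "\<forall>u. u \<noteq> 0 \<longrightarrow> u \<bullet> (K *v u) > 0"
    using K unfolding sym_pos_def_mat_def by auto
  define L where "L = lambda_max K"
  have L: "L > 0"
  proof -
    obtain i :: 'n where True by simp
    have ne: "ecanon i \<noteq> 0" using ecanon_nth[of i i] by auto
    have "0 < Knorm2 K (ecanon i)" using posK ne unfolding Knorm2_def by simp
    also have "\<dots> \<le> L * (ecanon i \<bullet> ecanon i)" unfolding L_def by (rule knorm_le_lmax[OF symK])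
    also have "ecanon i \<bullet> ecanon i = 1" by (simp add: ecanon_inner ecanon_nth)
    finally show ?thesis by simp
  qed
  have main: "w n \<in> prob_simplex \<and> Knorm2 K (w n - wh) \<le> 8 * L / (real n + 3)" if "n \<ge> 1" for n
    using that
  proof (induction n rule: nat_induct_at_least)
    case base
    have "Knorm2 K (w 1 - wh) \<le> L * ((w 1 - wh) \<bullet> (w 1 - wh))" unfolding L_def by (rule knorm_le_lmax[OF symK])
    also have "\<dots> \<le> L * 2" using simplex_dist[OF init wh] L by (intro mult_left_mono) auto
    finally show ?case using init by simp
  next
    case (Suc n)
    obtain ip im where ch: "vx_choice K wh (w n) ip im"
      and w': "w (Suc n) = (if vx_Delta ip im = 0 then w n
           else w n + vx_alpha K wh (w n) ip im *\<^sub>R vx_Delta ip im)"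
      using iter[OF Suc.hyps] unfolding vx_step_def by blast
    have wn: "w n \<in> prob_simplex" using Suc.IH by blast
    have st: "w (Suc n) \<in> prob_simplex \<and> Knorm2 K (w (Suc n) - wh) \<le> Knorm2 K (w n - wh) - (Knorm2 K (w n - wh))^2 / (2 * L)"
      unfolding L_def
      by (rule step_lemma[OF symK posK _ wh wn ch _ w']) (use L L_def step_cond[OF wn ch] in auto)
    have "Knorm2 K (w n - wh) - (Knorm2 K (w n - wh))^2 / (2 * L) \<le> 8 * L / (real n + 4)"
      using L Suc.hyps knorm_nonneg[OF posK] Suc.IH by (intro arith_step) auto
    then show ?case using st by (simp add: add.commute add.left_commute)
  qed
  show ?thesis using main L_def by simp
qed

end
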